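(* For every integer $d\ge0$, $\|B^{(d)}\|_\infty:=\sup_{k\ge0}\sum_{\ell\ge0}|b^{(d)}_{k,\ell}|\le 3d+2$.
   Context: Let $\{p_k\}_{k\ge0}$ be the orthonormal Legendre polynomials on $[-1,1]$: $p_k$ has exact degree $k$, positive leading coefficient, and $\int_{-1}^1 p_k(t)p_\ell(t)\,dt=\delta_{k\ell}$. Let $\Theta$ be the Heaviside function, $\Theta(x)=0$ for $x<0$ and $\Theta(x)=1$ for $x\ge0$. The Legendre basis matrix of degree $d$ is the infinite matrix $B^{(d)}=[b^{(d)}_{k,\ell}]_{k,\ell\ge0}$ with $b^{(d)}_{k,\ell}=\int_{-1}^1\int_{-1}^1 p_d(\tau)\Theta(\tau-\rho)p_k(\tau)p_\ell(\rho)\,d\rho\,d\tau$, i.e. the coefficient matrix of $p_d(t)\Theta(t-s)$. *)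

theory Defs
  imports "HOL-Analysis.Analysis" "HOL-Computational_Algebra.Polynomial"
begin

definition heaviside :: "real \<Rightarrow> real" where
  "heaviside x = (if x < 0 then 0 else 1)"

text \<open>A family of polynomials is the orthonormal Legendre family on [-1,1]:
  exact degree k, positive leading coefficient, orthonormal w.r.t. the
  Lebesgue (here Henstock--Kurzweil, equivalent for polynomials) integral on [-1,1].\<close>
definition orthonormal_legendre :: "(nat \<Rightarrow> real poly) \<Rightarrow> bool" where
  "orthonormal_legendre p \<longleftrightarrow>
     (\<forall>k. degree (p k) = k \<and> lead_coeff (p k) > 0) \<and>
     (\<forall>k l. integral {-1..1} (\<lambda>t. poly (p k) t * poly (p l) t) = (if k = l then 1 else 0))"

definition legendre_basis_entry :: "(nat \<Rightarrow> real poly) \<Rightarrow> nat \<Rightarrow> nat \<Rightarrow> nat \<Rightarrow> real" where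
  "legendre_basis_entry p d k l =
     integral {-1..1} (\<lambda>\<tau>. integral {-1..1} (\<lambda>\<rho>.
        poly (p d) \<tau> * heaviside (\<tau> - \<rho>) * poly (p k) \<tau> * poly (p l) \<rho>))"

end

theory Submission imports Defs begin


definition pint :: "real poly \<Rightarrow> real poly" where
  "pint q = (\<Sum>i\<le>degree q. monom (coeff q i / real (Suc i)) (Suc i))"

lemma pderiv_sum_gen: "pderiv (sum f S) = sum (\<lambda>i. pderiv (f i)) S"
  by (induction S rule: infinite_finite_induct) (auto simp: pderiv_add)

lemma pderiv_pint: "pderiv (pint q) = q"
proof -
  have "pderiv (pint q) = (\<Sum>i\<le>degree q. monom (coeff q i) i)"
    unfolding pint_def pderiv_sum_gen pderiv_monom
    by (intro sum.cong) (auto simp del: of_nat_Suc)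
  then show ?thesis by (simp add: poly_as_sum_of_monoms)
qed

lemma degree_pint: "degree (pint q) \<le> Suc (degree q)"
  unfolding pint_def
  by (rule degree_sum_le) (auto intro: order.trans[OF degree_monom_le])

lemma poly_integrable[intro]: "(\<lambda>x. poly (q::real poly) x) integrable_on {a..b}"
  by (intro integrable_continuous_interval continuous_on_poly continuous_on_id)

lemma ftc_poly:
  fixes r :: "real poly"
  assumes "a \<le> b"
  shows "integral {a..b} (\<lambda>x. poly (pderiv r) x) = poly r b - poly r a"
proof -
  have "((\<lambda>x. poly (pderiv r) x) has_integral (poly r b - poly r a)) {a..b}"
    by (rule fundamental_theorem_of_calculus[OF assms])
       (auto intro!: DERIV_subset[OF poly_DERIV] simp: has_real_derivative_iff_has_vector_derivative[symmetric])
  then show ?thesis by (rule integral_unique)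
qed

lemma int_poly:
  fixes q :: "real poly"
  assumes "a \<le> b"
  shows "integral {a..b} (\<lambda>x. poly q x) = poly (pint q) b - poly (pint q) a"
  using ftc_poly[OF assms, of "pint q"] by (simp add: pderiv_pint)



definition ip :: "real poly \<Rightarrow> real poly \<Rightarrow> real" where
  "ip q r = integral {-1..1} (\<lambda>x. poly q x * poly r x)"

lemma prod_integrable[intro]: "(\<lambda>x. poly (q::real poly) x * poly r x) integrable_on {a..b}"
  using poly_integrable[of "q*r"] by simp

lemma ip_comm: "ip q r = ip r q"
  unfolding ip_def by (simp add: mult.commute)

lemma ip_add_left: "ip (q1 + q2) r = ip q1 r + ip q2 r"
  unfolding ip_def by (simp add: distrib_right integral_add[OF prod_integrable prod_integrable])

lemma ip_diff_left: "ip (q1 - q2) r = ip q1 r - ip q2 r"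
  unfolding ip_def by (simp add: left_diff_distrib integral_diff[OF prod_integrable prod_integrable])

lemma ip_smult_left: "ip (smult c q) r = c * ip q r"
  unfolding ip_def by (simp add: mult.assoc)

lemma ip_zero_left[simp]: "ip 0 r = 0"
  unfolding ip_def by simp

lemma ip_sum_left: "ip (sum f S) r = (\<Sum>i\<in>S. ip (f i) r)"
  by (induction S rule: infinite_finite_induct) (auto simp: ip_add_left)

lemma ip_nonneg: "ip q q \<ge> 0"
  unfolding ip_def by (rule integral_nonneg) auto

lemma orth:
  assumes ol: "orthonormal_legendre p"
  shows "degree q < l \<Longrightarrow> ip q (p l) = 0"
proof (induction "degree q" arbitrary: q rule: less_induct)
  case less
  have deg: "\<And>k. degree (p k) = k" and on: "\<And>k l. ip (p k) (p l) = (if k = l then 1 else 0)"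
    using ol unfolding orthonormal_legendre_def ip_def by auto
  show ?case
  proof (cases "q = 0")
    case True then show ?thesis by simp
  next
    case False
    define n where "n = degree q"
    define c where "c = lead_coeff q / lead_coeff (p n)"
    define q' where "q' = q - smult c (p n)"
    have lc: "lead_coeff (p n) \<noteq> 0"
      using deg[of n] ol unfolding orthonormal_legendre_def by (metis less_irrefl)
    have q: "q = q' + smult c (p n)" unfolding q'_def by simp
    have "n \<noteq> l" using less n_def by auto
    then have pn: "ip (smult c (p n)) (p l) = 0" by (simp add: ip_smult_left on)
    have dq': "degree q' \<le> n" unfolding q'_def n_def
      by (rule degree_diff_le) (auto simp: deg intro: order.trans[OF degree_smult_le])
    have cq': "coeff q' n = 0" using lc deg[of n] unfolding q'_def c_def n_def by (simp del: leading_coeff_0_iff)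
    show ?thesis
    proof (cases "q' = 0")
      case True then show ?thesis using q pn by (simp add: ip_add_left)
    next
      case False
      then have "degree q' \<noteq> n" using cq' by (metis leading_coeff_0_iff)
      then have "degree q' < degree q" using dq' n_def by simp
      then have "ip q' (p l) = 0" using less by auto
      then show ?thesis using q pn by (simp add: ip_add_left)
    qed
  qed
qed



lemma ip_one: "ip 1 r = poly (pint r) 1 - poly (pint r) (-1)"
  unfolding ip_def using int_poly[of "-1" 1 r] by simp

lemma ip_const: "ip [:c:] r = c * (poly (pint r) 1 - poly (pint r) (-1))"
  using ip_smult_left[of c 1 r] ip_one[of r] by simp

lemma ip_parts: "ip (pint f) g + ip (pint g) f
   = poly (pint f * pint g) 1 - poly (pint f * pint g) (-1)"
proof -
  have "ip (pint f) g + ip (pint g) f =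
     integral {-1..1} (\<lambda>x. poly (pint f) x * poly g x + poly (pint g) x * poly f x)"
    unfolding ip_def by (simp add: integral_add[OF prod_integrable prod_integrable])
  also have "\<dots> = integral {-1..1} (\<lambda>x. poly (pderiv (pint f * pint g)) x)"
    by (simp add: pderiv_mult pderiv_pint algebra_simps)
  also have "\<dots> = poly (pint f * pint g) 1 - poly (pint f * pint g) (-1)"
    by (rule ftc_poly) simp
  finally show ?thesis .
qed

lemma entry_eq1:
  "legendre_basis_entry p d k l =
     ip (p d * (pint (p l) - [:poly (pint (p l)) (-1):])) (p k)"
proof -
  define L where "L = pint (p l)"
  have inner: "integral {-1..1} (\<lambda>\<rho>. poly (p d) \<tau> * heaviside (\<tau> - \<rho>) * poly (p k) \<tau> * poly (p l) \<rho>)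
      = poly (p d * (L - [:poly L (-1):])) \<tau> * poly (p k) \<tau>" if t: "\<tau> \<in> {-1..1}" for \<tau>
  proof -
    have "integral {-1..1} (\<lambda>\<rho>. poly (p d) \<tau> * heaviside (\<tau> - \<rho>) * poly (p k) \<tau> * poly (p l) \<rho>)
       = integral {-1..1} (\<lambda>\<rho>. if \<rho> \<in> {..\<tau>} then (poly (p d) \<tau> * poly (p k) \<tau>) * poly (p l) \<rho> else 0)"
      by (rule integral_cong) (auto simp: heaviside_def)
    also have "\<dots> = integral ({..\<tau>} \<inter> {-1..1}) (\<lambda>\<rho>. (poly (p d) \<tau> * poly (p k) \<tau>) * poly (p l) \<rho>)"
      by (rule integral_restrict_Int)
    also have "{..\<tau>} \<inter> {-1..1} = {-1..\<tau>}" using t by auto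
    also have "integral {-1..\<tau>} (\<lambda>\<rho>. (poly (p d) \<tau> * poly (p k) \<tau>) * poly (p l) \<rho>)
        = (poly (p d) \<tau> * poly (p k) \<tau>) * integral {-1..\<tau>} (\<lambda>\<rho>. poly (p l) \<rho>)"
      by (rule integral_mult_right)
    also have "integral {-1..\<tau>} (\<lambda>\<rho>. poly (p l) \<rho>) = poly L \<tau> - poly L (-1)"
      unfolding L_def using t by (intro int_poly) auto
    finally show ?thesis by (simp add: algebra_simps)
  qed
  show ?thesis
    unfolding legendre_basis_entry_def ip_def L_def[symmetric]
    by (rule integral_cong) (use inner in auto)
qed

lemma entry_eq2:
  "legendre_basis_entry p d k l =
     ip ([:poly (pint (p d * p k)) 1:] - pint (p d * p k)) (p l)"
proof -
  define f where "f = p d * p k"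
  define A where "A = pint f"
  define L where "L = pint (p l)"
  have "legendre_basis_entry p d k l = ip (f * L - smult (poly L (-1)) f) 1"
    unfolding entry_eq1 L_def[symmetric] ip_def f_def
    by (rule integral_cong) (simp add: algebra_simps)
  also have "\<dots> = ip L f - poly L (-1) * (poly A 1 - poly A (-1))"
    unfolding ip_diff_left ip_smult_left A_def
    using int_poly[of "-1" 1 f] by (simp add: ip_comm[of _ 1] ip_one ip_def mult.commute)
  finally have e1: "legendre_basis_entry p d k l = ip L f - poly L (-1) * (poly A 1 - poly A (-1))" .
  have e2: "ip ([:poly A 1:] - A) (p l) = poly A 1 * (poly L 1 - poly L (-1)) - ip A (p l)"
    unfolding ip_diff_left ip_const L_def ..
  have e3: "ip A (p l) + ip L f = poly (A * L) 1 - poly (A * L) (-1)"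
    unfolding A_def L_def by (rule ip_parts)
  show ?thesis
    using e1 e2 e3 unfolding f_def[symmetric] A_def[symmetric] by (simp add: algebra_simps)
qed



lemma quad: fixes A B C :: real
  assumes h: "\<And>t. 0 \<le> A + 2*t*B + t^2*C" and c: "C \<ge> 0"
  shows "B^2 \<le> A*C"
proof (cases "C = 0")
  case True
  have "B = 0"
  proof (rule ccontr)
    assume "B \<noteq> 0"
    then have "A + 2*(-(A+1)/(2*B))*B + (-(A+1)/(2*B))^2*C = -1" using True by (simp add: field_simps)
    then show False using h[of "-(A+1)/(2*B)"] by simp
  qed
  then show ?thesis using True by simp
next
  case False
  then have Cp: "C > 0" using c by simp
  have "A + 2*(-B/C)*B + (-B/C)^2*C = A - B^2/C" using Cp by (simp add: field_simps power2_eq_square)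
  then have "0 \<le> A - B^2/C" using h[of "-B/C"] by simp
  then show ?thesis using Cp by (simp add: field_simps)
qed

lemma sq_integrable[intro]: "(\<lambda>x. (poly (q::real poly) x)^2) integrable_on {a..b}"
  using prod_integrable[of q q] by (simp add: power2_eq_square)

lemma cs:
  fixes u v :: "real poly"
  shows "(integral {a..b} (\<lambda>x. poly u x * poly v x))^2
     \<le> integral {a..b} (\<lambda>x. (poly u x)^2) * integral {a..b} (\<lambda>x. (poly v x)^2)"
proof -
  define A where "A = integral {a..b} (\<lambda>x. (poly u x)^2)"
  define B where "B = integral {a..b} (\<lambda>x. poly u x * poly v x)"
  define C where "C = integral {a..b} (\<lambda>x. (poly v x)^2)"
  have "0 \<le> A + 2*t*B + t^2*C" for t
  proof -
    have "0 \<le> integral {a..b} (\<lambda>x. (poly u x + t * poly v x)^2)"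
      by (rule integral_nonneg) (use sq_integrable[of "u + smult t v"] in auto)
    also have "\<dots> = integral {a..b} (\<lambda>x. ((poly u x)^2 + (2*t) * (poly u x * poly v x)) + t^2 * (poly v x)^2)"
      by (rule integral_cong) (simp add: power2_eq_square algebra_simps)
    also have "\<dots> = A + 2*t*B + t^2*C"
    proof -
      have i1: "(\<lambda>x. (poly u x)^2) integrable_on {a..b}" by auto
      have i2: "(\<lambda>x. (2*t) * (poly u x * poly v x)) integrable_on {a..b}"
        using prod_integrable[of "smult (2*t) u" v] by (simp add: mult.assoc)
      have i3: "(\<lambda>x. t^2 * (poly v x)^2) integrable_on {a..b}"
        using sq_integrable[of "smult t v"] by (simp add: power_mult_distrib)
      have "integral {a..b} (\<lambda>x. ((poly u x)^2 + (2*t) * (poly u x * poly v x)) + t^2 * (poly v x)^2)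
         = integral {a..b} (\<lambda>x. (poly u x)^2) + integral {a..b} (\<lambda>x. (2*t) * (poly u x * poly v x))
           + integral {a..b} (\<lambda>x. t^2 * (poly v x)^2)"
        using integral_add[OF integrable_add[OF i1 i2] i3] integral_add[OF i1 i2] by simp
      then show ?thesis unfolding A_def B_def C_def by simp
    qed
    finally show ?thesis .
  qed
  moreover have "C \<ge> 0" unfolding C_def by (rule integral_nonneg) auto
  ultimately have "B^2 \<le> A*C" by (rule quad)
  then show ?thesis unfolding A_def B_def C_def .
qed



lemma ip_diff_right: "ip q (r1 - r2) = ip q r1 - ip q r2"
  by (metis ip_comm ip_diff_left)

lemma on_ip:
  assumes ol: "orthonormal_legendre p"
  shows "ip (p k) (p l) = (if k = l then 1 else 0)"
  using ol unfolding orthonormal_legendre_def ip_def by auto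

lemma bessel:
  assumes ol: "orthonormal_legendre p" and S: "finite S"
  shows "(\<Sum>l\<in>S. (ip Q (p l))^2) \<le> ip Q Q"
proof -
  define b where "b l = ip Q (p l)" for l
  define s where "s = (\<Sum>l\<in>S. smult (b l) (p l))"
  have sp: "ip s (p m) = (if m \<in> S then b m else 0)" for m
  proof -
    have "ip s (p m) = (\<Sum>l\<in>S. b l * (if l = m then 1 else 0))"
      unfolding s_def ip_sum_left ip_smult_left on_ip[OF ol] ..
    also have "\<dots> = (\<Sum>l\<in>S. if l = m then b l else 0)" by (rule sum.cong) auto
    also have "\<dots> = (if m \<in> S then b m else 0)" using S by (simp add: sum.delta)
    finally show ?thesis .
  qed
  have ss: "ip s s = (\<Sum>l\<in>S. (b l)^2)"
  proof -
    have "ip s s = (\<Sum>l\<in>S. b l * ip (p l) s)" unfolding s_def[of] ip_sum_left ip_smult_left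
      by (simp add: s_def)
    also have "\<dots> = (\<Sum>l\<in>S. (b l)^2)"
      by (rule sum.cong) (auto simp: ip_comm[of "p _" s] sp power2_eq_square)
    finally show ?thesis .
  qed
  have sQ: "ip s Q = (\<Sum>l\<in>S. (b l)^2)"
    unfolding s_def ip_sum_left ip_smult_left
    by (rule sum.cong) (auto simp: ip_comm[of "p _" Q] b_def power2_eq_square)
  have "0 \<le> ip (Q - s) (Q - s)" by (rule ip_nonneg)
  also have "\<dots> = ip Q Q - 2 * ip s Q + ip s s"
    unfolding ip_diff_left ip_diff_right using ip_comm[of Q s] by simp
  finally show ?thesis using ss sQ b_def by simp
qed



lemma sub_le:
  fixes g :: "real poly"
  assumes "-1 \<le> x"
  shows "integral {x..1} (\<lambda>t. (poly g t)^2) \<le> ip g g"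
  unfolding ip_def power2_eq_square[symmetric]
  by (rule integral_subset_le) (use assms in auto)

lemma Qpoint:
  assumes ol: "orthonormal_legendre p" and x: "x \<in> {-1..1}"
  shows "(poly ([:poly (pint (p d * p k)) 1:] - pint (p d * p k)) x)^2
          \<le> integral {x..1} (\<lambda>t. (poly (p d) t)^2)"
proof -
  have "poly ([:poly (pint (p d * p k)) 1:] - pint (p d * p k)) x
      = integral {x..1} (\<lambda>t. poly (p d) t * poly (p k) t)"
    using int_poly[of x 1 "p d * p k"] x by simp
  then have "(poly ([:poly (pint (p d * p k)) 1:] - pint (p d * p k)) x)^2
     \<le> integral {x..1} (\<lambda>t. (poly (p d) t)^2) * integral {x..1} (\<lambda>t. (poly (p k) t)^2)"
    using cs[of x 1 "p d" "p k"] by simp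
  also have "\<dots> \<le> integral {x..1} (\<lambda>t. (poly (p d) t)^2) * 1"
  proof (rule mult_left_mono)
    show "integral {x..1} (\<lambda>t. (poly (p k) t)^2) \<le> 1"
      using sub_le[of x "p k"] x on_ip[OF ol, of k k] by simp
    show "0 \<le> integral {x..1} (\<lambda>t. (poly (p d) t)^2)" by (rule integral_nonneg) auto
  qed
  finally show ?thesis by simp
qed

lemma Qbound:
  fixes d k :: nat
  assumes ol: "orthonormal_legendre p"
  defines "Q \<equiv> [:poly (pint (p d * p k)) 1:] - pint (p d * p k)"
  shows "ip Q Q \<le> (if d = 0 then 1 else 2)"
proof -
  have ipQ: "ip Q Q = integral {-1..1} (\<lambda>x. (poly Q x)^2)" unfolding ip_def by (simp add: power2_eq_square)
  show ?thesis
  proof (cases "d = 0")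
    case False
    have "integral {-1..1} (\<lambda>x. (poly Q x)^2) \<le> integral {-1..1} (\<lambda>x::real. 1::real)"
    proof (rule integral_le)
      fix x :: real assume x: "x \<in> {-1..1}"
      have "(poly Q x)^2 \<le> integral {x..1} (\<lambda>t. (poly (p d) t)^2)"
        unfolding Q_def by (rule Qpoint[OF ol x])
      also have "\<dots> \<le> 1" using sub_le[of x "p d"] x on_ip[OF ol, of d d] by simp
      finally show "(poly Q x)^2 \<le> 1" .
    qed auto
    then show ?thesis using False ipQ by simp
  next
    case True
    have "degree (p 0) = 0" using ol unfolding orthonormal_legendre_def by auto
    then have p0: "p 0 = [:coeff (p 0) 0:]" by (simp add: degree_0_id)
    define c where "c = coeff (p 0) 0"
    have pc: "poly (p 0) x = c" for x by (subst p0) (simp add: c_def)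
    have "ip (p 0) (p 0) = 2 * c^2" unfolding ip_def
      by (simp add: pc power2_eq_square)
    then have c2: "c^2 = 1/2" using on_ip[OF ol, of 0 0] by simp
    have "integral {-1..1} (\<lambda>x. (poly Q x)^2) \<le> integral {-1..1} (\<lambda>x. poly (pderiv [:0, 1/2, -1/4:]) x)"
    proof (rule integral_le)
      fix x :: real assume x: "x \<in> {-1..1}"
      have "(poly Q x)^2 \<le> integral {x..1} (\<lambda>t. (poly (p d) t)^2)"
        unfolding Q_def by (rule Qpoint[OF ol x])
      also have "\<dots> = (1 - x) * c^2" using True x
        by (simp add: pc)
      also have "\<dots> = poly (pderiv [:0, 1/2, -1/4:]) x" using c2 by (simp add: pderiv_pCons algebra_simps)
      finally show "(poly Q x)^2 \<le> poly (pderiv [:0, 1/2, -1/4:]) x" .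
    qed auto
    also have "\<dots> = 1" by (subst ftc_poly) auto
    finally show ?thesis using True ipQ by simp
  qed
qed



lemma van_hi:
  assumes ol: "orthonormal_legendre p" and l: "k + d + 1 < l"
  shows "legendre_basis_entry p d k l = 0"
proof -
  have deg: "\<And>k. degree (p k) = k" using ol unfolding orthonormal_legendre_def by auto
  have "degree (pint (p d * p k)) \<le> k + d + 1"
    using degree_pint[of "p d * p k"] degree_mult_le[of "p d" "p k"] deg[of d] deg[of k] by simp
  then have "degree ([:poly (pint (p d * p k)) 1:] - pint (p d * p k)) \<le> k + d + 1"
    by (intro degree_diff_le) auto
  then show ?thesis unfolding entry_eq2 using l by (intro orth[OF ol]) auto
qed

lemma van_lo:
  assumes ol: "orthonormal_legendre p" and l: "l + d + 1 < k"
  shows "legendre_basis_entry p d k l = 0"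
proof -
  have deg: "\<And>k. degree (p k) = k" using ol unfolding orthonormal_legendre_def by auto
  have "degree (pint (p l) - [:poly (pint (p l)) (-1):]) \<le> l + 1"
    using degree_pint[of "p l"] deg[of l] by (intro degree_diff_le) auto
  then have "degree (p d * (pint (p l) - [:poly (pint (p l)) (-1):])) \<le> l + d + 1"
    using degree_mult_le[of "p d" "pint (p l) - [:poly (pint (p l)) (-1):]"] deg[of d] by simp
  then show ?thesis unfolding entry_eq1 using l by (intro orth[OF ol]) auto
qed

theorem lemma3p5:
  fixes p :: "nat \<Rightarrow> real poly" and d :: nat
  assumes "orthonormal_legendre p"
  shows "\<forall>k. summable (\<lambda>l. \<bar>legendre_basis_entry p d k l\<bar>) \<and>
             (\<Sum>l. \<bar>legendre_basis_entry p d k l\<bar>) \<le> 3 * real d + 2"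
proof
  fix k
  note ol = assms
  define b where "b l = legendre_basis_entry p d k l" for l
  define S where "S = {k - (d+1) .. k + d + 1}"
  define Q where "Q = [:poly (pint (p d * p k)) 1:] - pint (p d * p k)"
  have fin: "finite S" unfolding S_def by simp
  have out: "\<bar>b l\<bar> = 0" if "l \<notin> S" for l
  proof -
    from that have "l < k - (d+1) \<or> k + d + 1 < l" unfolding S_def by auto
    then show ?thesis
    proof
      assume "l < k - (d+1)" then have "l + d + 1 < k" by linarith
      then show ?thesis unfolding b_def using van_lo[OF ol] by simp
    next
      assume "k + d + 1 < l" then show ?thesis unfolding b_def using van_hi[OF ol] by simp
    qed
  qed
  have summ: "summable (\<lambda>l. \<bar>b l\<bar>)" by (rule summable_finite[OF fin out])
  have sinf: "(\<Sum>l. \<bar>b l\<bar>) = (\<Sum>l\<in>S. \<bar>b l\<bar>)" by (rule suminf_finite[OF fin out])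
  have cardS: "card S \<le> 2 * d + 3" unfolding S_def by simp
  have bQ: "b l = ip Q (p l)" for l unfolding b_def Q_def by (rule entry_eq2)
  have bes: "(\<Sum>l\<in>S. (b l)^2) \<le> (if d = 0 then 1 else 2)"
    using bessel[OF ol fin, of Q] Qbound[OF ol, of d k] unfolding bQ Q_def by simp
  have "(\<Sum>l\<in>S. \<bar>b l\<bar>)^2 \<le> (\<Sum>l\<in>S. \<bar>b l\<bar>^2) * card S"
    by (rule sum_squared_le_sum_of_squares)
  also have "\<dots> \<le> (if d = 0 then 1 else 2) * real (2 * d + 3)"
    using bes cardS by (intro mult_mono) (auto intro: sum_nonneg)
  also have "\<dots> \<le> (3 * real d + 2)^2"
  proof (cases "d = 0")
    case False
    then have "real d \<ge> 1" by simp
    have n: "real d * (real d * 9) \<ge> 0" by simp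
    have e1: "(3 * real d + 2)^2 = real d * (real d * 9) + 12 * real d + 4"
      by (simp add: power2_eq_square algebra_simps)
    have e2: "(if d = 0 then 1 else 2) * real (2 * d + 3) = 2 * (2 * real d + 3)" using False by simp
    show ?thesis unfolding e1 e2 using n \<open>real d \<ge> 1\<close> by (smt (verit))
  qed (simp add: power2_eq_square)
  finally have "(\<Sum>l\<in>S. \<bar>b l\<bar>) \<le> 3 * real d + 2"
    by (rule power2_le_imp_le) simp
  then show "summable (\<lambda>l. \<bar>legendre_basis_entry p d k l\<bar>) \<and>
             (\<Sum>l. \<bar>legendre_basis_entry p d k l\<bar>) \<le> 3 * real d + 2"
    using summ sinf unfolding b_def by simp
qed

end
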